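(* Let $(E,A)$ satisfy the standing assumptions below and set $p:=p_{\mathrm{res}}^{(E,A)}+1$. For every $x_0\in X_{\operatorname{ran}}$ and $z_0\in Z_{\operatorname{ran}}$ the mappings $t\mapsto S_r(t)x_0$ and $t\mapsto S_l(t)z_0$ are continuous.
   Context: Standing assumptions: $X$, $Z$ complex Banach spaces; $E\in L(X,Z)$; $A\colon\mathrm{dom}(A)\subseteq X\to Z$ closed and densely defined; $(E,A)$ has a complex resolvent index $p_{\mathrm{res}}^{(E,A)}$, i.e.~the smallest $n\in\mathbb N_0$ with $\mathbb C_{\operatorname{Re}>\omega}\subseteq\rho(E,A)$ and $\Vert(\lambda E-A)^{-1}\Vert\le C|\lambda|^{n-1}$ on $\mathbb C_{\operatorname{Re}>\omega}$ for some $\omega\in\mathbb R$, $C>0$. With $R_r(\lambda)=(\lambda E-A)^{-1}E$, $R_l(\lambda)=E(\lambda E-A)^{-1}$, set $X_{\operatorname{ran}}=\overline{\operatorname{ran}R_r(\lambda)^p}$, $Z_{\operatorname{ran}}=\overline{\operatorname{ran}R_l(\lambda)^p}$ (ranges' closures, independent of $\lambda\in\rho(E,A)$). $(S_r(t))_{t\ge0}$ on $X_{\operatorname{ran}}$ and $(S_l(t))_{t\ge0}$ on $Z_{\operatorname{ran}}$ are the $p$-times integrated semigroups of $(E,A)$: exponentially bounded families ($\Vert S_r(t)\Vert,\Vert S_l(t)\Vert\le C\mathrm e^{\omega t}$) with $R_r(\lambda)x=\lambda^p\int_0^\infty \mathrm e^{-\lambda t}S_r(t)x\,\mathrm dt$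 for $x\in X_{\operatorname{ran}}$ and $R_l(\lambda)z=\lambda^p\int_0^\infty \mathrm e^{-\lambda t}S_l(t)z\,\mathrm dt$ for $z\in Z_{\operatorname{ran}}$, $\operatorname{Re}\lambda>\omega$; for $x_0\in\operatorname{ran}R_r(\mu)^p$, $S_r(t)x_0$ is the $p$-fold iterated integral of the mild solution of $\frac{\mathrm d}{\mathrm dt}Ex=Ax$, $x(0)=x_0$ (and $S_l$ is obtained analogously from the pair $(E(\mu E-A)^{-1},A(\mu E-A)^{-1})$). *)

theory Defs
  imports "HOL-Analysis.Analysis"
begin

class complex_banach = banach +
  fixes scaleC :: "complex \<Rightarrow> 'a \<Rightarrow> 'a"
  assumes scaleC_add_right: "scaleC c (x + y) = scaleC c x + scaleC c y"
    and scaleC_add_left: "scaleC (b + c) x = scaleC b x + scaleC c x"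
    and scaleC_scaleC: "scaleC b (scaleC c x) = scaleC (b * c) x"
    and scaleC_of_real: "scaleC (of_real r) x = r *\<^sub>R x"
    and norm_scaleC: "norm (scaleC c x) = cmod c * norm x"

definition csubspace :: "'a::complex_banach set \<Rightarrow> bool" where
  "csubspace V \<longleftrightarrow> 0 \<in> V \<and> (\<forall>x\<in>V. \<forall>y\<in>V. x + y \<in> V) \<and> (\<forall>c. \<forall>x\<in>V. scaleC c x \<in> V)"

definition clinear_on :: "'a::complex_banach set \<Rightarrow> ('a \<Rightarrow> 'b::complex_banach) \<Rightarrow> bool" where
  "clinear_on V f \<longleftrightarrow> (\<forall>x\<in>V. \<forall>y\<in>V. f (x + y) = f x + f y) \<and>
      (\<forall>c. \<forall>x\<in>V. f (scaleC c x) = scaleC c (f x))"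

definition standing_op :: "('x::complex_banach \<Rightarrow> 'z::complex_banach) \<Rightarrow> ('x \<Rightarrow> 'z) \<Rightarrow> 'x set \<Rightarrow> bool" where
  "standing_op E A D \<longleftrightarrow> bounded_linear E \<and> (\<forall>c x. E (scaleC c x) = scaleC c (E x)) \<and>
     csubspace D \<and> clinear_on D A \<and> closed {(x, A x) | x. x \<in> D} \<and> closure D = UNIV"

definition in_resolvent :: "('x::complex_banach \<Rightarrow> 'z::complex_banach) \<Rightarrow> ('x \<Rightarrow> 'z) \<Rightarrow> 'x set \<Rightarrow> complex \<Rightarrow> bool" where
  "in_resolvent E A D l \<longleftrightarrow> bij_betw (\<lambda>x. scaleC l (E x) - A x) D UNIV \<and>
      bounded_linear (inv_into D (\<lambda>x. scaleC l (E x) - A x))"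

definition res_op :: "('x::complex_banach \<Rightarrow> 'z::complex_banach) \<Rightarrow> ('x \<Rightarrow> 'z) \<Rightarrow> 'x set \<Rightarrow> complex \<Rightarrow> 'z \<Rightarrow> 'x" where
  "res_op E A D l = inv_into D (\<lambda>x. scaleC l (E x) - A x)"

definition res_index_ok :: "('x::complex_banach \<Rightarrow> 'z::complex_banach) \<Rightarrow> ('x \<Rightarrow> 'z) \<Rightarrow> 'x set \<Rightarrow> nat \<Rightarrow> bool" where
  "res_index_ok E A D n \<longleftrightarrow> (\<exists>\<omega>::real. \<exists>C::real. C > 0 \<and>
      (\<forall>l. Re l > \<omega> \<longrightarrow> in_resolvent E A D l \<and>
             onorm (res_op E A D l) \<le> C * cmod l powi (int n - 1)))"

definition has_res_index :: "('x::complex_banach \<Rightarrow> 'z::complex_banach) \<Rightarrow> ('x \<Rightarrow> 'z) \<Rightarrow> 'x set \<Rightarrow> bool" where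
  "has_res_index E A D \<longleftrightarrow> (\<exists>n. res_index_ok E A D n)"

definition p_res :: "('x::complex_banach \<Rightarrow> 'z::complex_banach) \<Rightarrow> ('x \<Rightarrow> 'z) \<Rightarrow> 'x set \<Rightarrow> nat" where
  "p_res E A D = (LEAST n. res_index_ok E A D n)"

definition Rr :: "('x::complex_banach \<Rightarrow> 'z::complex_banach) \<Rightarrow> ('x \<Rightarrow> 'z) \<Rightarrow> 'x set \<Rightarrow> complex \<Rightarrow> 'x \<Rightarrow> 'x" where
  "Rr E A D l = res_op E A D l \<circ> E"

definition Rl :: "('x::complex_banach \<Rightarrow> 'z::complex_banach) \<Rightarrow> ('x \<Rightarrow> 'z) \<Rightarrow> 'x set \<Rightarrow> complex \<Rightarrow> 'z \<Rightarrow> 'z" where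
  "Rl E A D l = E \<circ> res_op E A D l"

definition Xran :: "('x::complex_banach \<Rightarrow> 'z::complex_banach) \<Rightarrow> ('x \<Rightarrow> 'z) \<Rightarrow> 'x set \<Rightarrow> complex \<Rightarrow> nat \<Rightarrow> 'x set" where
  "Xran E A D \<mu> p = closure (range ((Rr E A D \<mu>) ^^ p))"

definition Zran :: "('x::complex_banach \<Rightarrow> 'z::complex_banach) \<Rightarrow> ('x \<Rightarrow> 'z) \<Rightarrow> 'x set \<Rightarrow> complex \<Rightarrow> nat \<Rightarrow> 'z set" where
  "Zran E A D \<mu> p = closure (range ((Rl E A D \<mu>) ^^ p))"

text \<open>x is a mild solution of d/dt E x = A x, x(0) = x0.\<close>
definition mild_solution :: "('x::complex_banach \<Rightarrow> 'z::complex_banach) \<Rightarrow> ('x \<Rightarrow> 'z) \<Rightarrow> 'x set \<Rightarrow> 'x \<Rightarrow> (real \<Rightarrow> 'x) \<Rightarrow> bool" where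
  "mild_solution E A D x0 x \<longleftrightarrow> continuous_on {0..} x \<and>
     (\<forall>t\<ge>0. integral {0..t} x \<in> D \<and> E (x t) - E x0 = A (integral {0..t} x))"

fun iter_int :: "nat \<Rightarrow> (real \<Rightarrow> 'a::banach) \<Rightarrow> real \<Rightarrow> 'a" where
  "iter_int 0 f = f"
| "iter_int (Suc n) f = (\<lambda>t. integral {0..t} (iter_int n f))"

definition exp_bounded_laplace ::
  "'x::complex_banach set \<Rightarrow> (complex \<Rightarrow> bool) \<Rightarrow> (complex \<Rightarrow> 'x \<Rightarrow> 'x) \<Rightarrow> nat \<Rightarrow> (real \<Rightarrow> 'x \<Rightarrow> 'x) \<Rightarrow> bool" where
  "exp_bounded_laplace V inres R p S \<longleftrightarrow> (\<exists>C::real. \<exists>\<omega>::real. C > 0 \<and>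
     (\<forall>t\<ge>0. (\<forall>x\<in>V. S t x \<in> V) \<and> clinear_on V (S t) \<and>
            (\<forall>x\<in>V. norm (S t x) \<le> C * exp (\<omega> * t) * norm x)) \<and>
     (\<forall>l. Re l > \<omega> \<longrightarrow> inres l \<and>
        (\<forall>x\<in>V. \<exists>y. ((\<lambda>t. scaleC (exp (- (l * of_real t))) (S t x)) has_integral y) {0..} \<and>
                   R l x = scaleC (l ^ p) y)))"

definition int_semigroup_r ::
  "('x::complex_banach \<Rightarrow> 'z::complex_banach) \<Rightarrow> ('x \<Rightarrow> 'z) \<Rightarrow> 'x set \<Rightarrow> complex \<Rightarrow> nat \<Rightarrow> (real \<Rightarrow> 'x \<Rightarrow> 'x) \<Rightarrow> bool" where
  "int_semigroup_r E A D \<mu> p S \<longleftrightarrow>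
     exp_bounded_laplace (Xran E A D \<mu> p) (in_resolvent E A D) (Rr E A D) p S \<and>
     (\<forall>x0 \<in> range ((Rr E A D \<mu>) ^^ p). \<exists>x. mild_solution E A D x0 x \<and>
         (\<forall>t\<ge>0. S t x0 = iter_int p x t))"

definition int_semigroup_l ::
  "('x::complex_banach \<Rightarrow> 'z::complex_banach) \<Rightarrow> ('x \<Rightarrow> 'z) \<Rightarrow> 'x set \<Rightarrow> complex \<Rightarrow> nat \<Rightarrow> (real \<Rightarrow> 'z \<Rightarrow> 'z) \<Rightarrow> bool" where
  "int_semigroup_l E A D \<mu> p S \<longleftrightarrow>
     exp_bounded_laplace (Zran E A D \<mu> p) (in_resolvent E A D) (Rl E A D) p S \<and>
     (\<forall>z0 \<in> range ((Rl E A D \<mu>) ^^ p). \<exists>z.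
         mild_solution (E \<circ> res_op E A D \<mu>) (A \<circ> res_op E A D \<mu>) UNIV z0 z \<and>
         (\<forall>t\<ge>0. S t z0 = iter_int p z t))"

end

theory Submission
  imports Defs
begin

lemma diff_in_closure_range:
  fixes L :: "'a::real_normed_vector \<Rightarrow> 'b::real_normed_vector"
  assumes L: "linear L" and x: "x \<in> closure (range L)" and y: "y \<in> closure (range L)"
  shows "x - y \<in> closure (range L)"
proof -
  obtain a where a: "\<forall>n. a n \<in> range L" "a \<longlonglongrightarrow> x" using x unfolding closure_sequential by blast
  obtain b where b: "\<forall>n. b n \<in> range L" "b \<longlonglongrightarrow> y" using y unfolding closure_sequential by blast
  have r: "\<forall>n. a n - b n \<in> range L"
  proof
    fix n
    obtain u where u: "a n = L u" using a(1) by blast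
    obtain v where v: "b n = L v" using b(1) by blast
    have "a n - b n = L (u - v)" unfolding u v using L by (rule linear_diff[symmetric])
    then show "a n - b n \<in> range L" by (rule image_eqI) simp
  qed
  have "(\<lambda>n. a n - b n) \<longlonglongrightarrow> x - y" using a(2) b(2) by (rule tendsto_diff)
  with r show ?thesis unfolding closure_sequential by (intro exI[of _ "\<lambda>n. a n - b n"] conjI)
qed

lemma linear_funpow:
  fixes L :: "'a::real_normed_vector \<Rightarrow> 'a"
  assumes "linear L" shows "linear (L ^^ n)"
proof (induction n)
  case 0 then show ?case by (simp add: linear_id[unfolded id_def])
next
  case (Suc n) then show ?case using assms linear_compose[of "L ^^ n" L] by (simp add: o_def)
qed

lemma cont_integral_atLeast:
  fixes f :: "real \<Rightarrow> 'a::banach"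
  assumes "continuous_on {0..} f"
  shows "continuous_on {0..} (\<lambda>t. integral {0..t} f)"
  unfolding continuous_on_eq_continuous_within
proof
  fix x :: real assume x: "x \<in> {0..}"
  have "continuous_on {0..x+1} f" using assms by (rule continuous_on_subset) auto
  then have "f integrable_on {0..x+1}" by (rule integrable_continuous_real)
  then have "continuous_on {0..x+1} (\<lambda>t. integral {0..t} f)"
    by (rule indefinite_integral_continuous_1)
  then have c: "continuous (at x within {0..x+1}) (\<lambda>t. integral {0..t} f)"
    using x by (simp add: continuous_on_eq_continuous_within)
  have "at x within {0..} = at x within {0..x+1}"
    by (rule at_within_nhd[where S="{..<x+1}"]) auto
  then show "continuous (at x within {0..}) (\<lambda>t. integral {0..t} f)" using c by simp
qed

lemma cont_iter_int:
  fixes f :: "real \<Rightarrow> 'a::banach"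
  assumes "continuous_on {0..} f"
  shows "continuous_on {0..} (iter_int n f)"
  by (induction n) (simp_all add: assms cont_integral_atLeast)

lemma scaleC_minus_one: "scaleC (-1) (x::'a::complex_banach) = - x"
  using scaleC_of_real[of "-1" x] by simp

lemma main_closure:
  fixes L :: "'a::complex_banach \<Rightarrow> 'a" and S :: "real \<Rightarrow> 'a \<Rightarrow> 'a"
  assumes L: "linear L"
    and V: "V = closure (range L)"
    and eb: "exp_bounded_laplace V inres R p S"
    and dense: "\<forall>y \<in> range L. continuous_on {0..} (\<lambda>t. S t y)"
    and x0: "x0 \<in> V"
  shows "continuous_on {0..} (\<lambda>t. S t x0)"
proof -
  obtain C \<omega> where C: "C > 0" and
    Sb: "\<And>t. t \<ge> 0 \<Longrightarrow> (\<forall>x\<in>V. S t x \<in> V) \<and> clinear_on V (S t) \<and>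
            (\<forall>x\<in>V. norm (S t x) \<le> C * exp (\<omega> * t) * norm x)"
    using eb unfolding exp_bounded_laplace_def by blast
  have sub: "\<And>t x y. t \<ge> 0 \<Longrightarrow> x \<in> V \<Longrightarrow> y \<in> V \<Longrightarrow> norm (S t x - S t y) \<le> C * exp (\<omega> * t) * norm (x - y)"
  proof -
    fix t x y assume t: "(t::real) \<ge> 0" and x: "x \<in> V" and y: "y \<in> V"
    have xy: "x - y \<in> V" using diff_in_closure_range[OF L] x y V by simp
    have "S t x = S t ((x - y) + y)" by simp
    also have "\<dots> = S t (x - y) + S t y" using Sb[OF t] xy y unfolding clinear_on_def by blast
    finally have "S t x - S t y = S t (x - y)" by simp
    then show "norm (S t x - S t y) \<le> C * exp (\<omega> * t) * norm (x - y)" using Sb[OF t] xy by simp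
  qed
  show ?thesis unfolding continuous_on_iff
  proof (intro ballI allI impI)
    fix t0 :: real and e :: real assume t0: "t0 \<in> {0..}" and e: "e > 0"
    define M where "M = C * exp (\<bar>\<omega>\<bar> * (t0 + 1))"
    have M: "M > 0" unfolding M_def using C by simp
    have Mb: "\<And>t. 0 \<le> t \<Longrightarrow> t \<le> t0 + 1 \<Longrightarrow> C * exp (\<omega> * t) \<le> M"
    proof -
      fix t :: real assume "0 \<le> t" "t \<le> t0 + 1"
      then have "\<omega> * t \<le> \<bar>\<omega>\<bar> * (t0 + 1)"
        by (metis abs_ge_self abs_mult abs_of_nonneg dual_order.trans mult_mono' abs_ge_zero)
      then show "C * exp (\<omega> * t) \<le> M" unfolding M_def using C by simp
    qed
    obtain y where y: "y \<in> range L" and dy: "dist y x0 < e / (3 * M)"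
    proof -
      have "e / (3 * M) > 0" using M e by simp
      then show ?thesis using that x0 V closure_approachable[of x0 "range L"] by blast
    qed
    have yV: "y \<in> V" unfolding V using y by (rule closure_subset[THEN subsetD])
    obtain d where d: "d > 0" and dd: "\<forall>t\<in>{0..}. dist t t0 < d \<longrightarrow> dist (S t y) (S t0 y) < e / 3"
    proof -
      have "e / 3 > 0" using e by simp
      moreover have "continuous_on {0..} (\<lambda>t. S t y)" using dense y by blast
      ultimately show ?thesis using that t0 unfolding continuous_on_iff by blast
    qed
    show "\<exists>\<delta>>0. \<forall>x'\<in>{0..}. dist x' t0 < \<delta> \<longrightarrow> dist (S x' x0) (S t0 x0) < e"
    proof (intro exI[of _ "min d 1"] conjI ballI impI)
      show "min d 1 > 0" using d by simp
      fix t :: real assume t: "t \<in> {0..}" and dt: "dist t t0 < min d 1"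
      have tle: "t \<le> t0 + 1" using dt by (simp add: dist_real_def abs_less_iff)
      have ndy: "norm (x0 - y) < e / (3 * M)" using dy by (simp add: dist_norm norm_minus_commute)
      have 1: "norm (S t x0 - S t y) \<le> M * norm (x0 - y)"
      proof -
        have "C * exp (\<omega> * t) * norm (x0 - y) \<le> M * norm (x0 - y)"
          by (rule mult_right_mono[OF Mb[of t]]) (use t tle in auto)
        moreover have "norm (S t x0 - S t y) \<le> C * exp (\<omega> * t) * norm (x0 - y)"
          using sub[of t x0 y] t x0 yV by simp
        ultimately show ?thesis by (rule order_trans[rotated])
      qed
      have 2: "norm (S t0 x0 - S t0 y) \<le> M * norm (x0 - y)"
      proof -
        have "C * exp (\<omega> * t0) * norm (x0 - y) \<le> M * norm (x0 - y)"
          by (rule mult_right_mono[OF Mb[of t0]]) (use t0 in auto)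
        moreover have "norm (S t0 x0 - S t0 y) \<le> C * exp (\<omega> * t0) * norm (x0 - y)"
          using sub[of t0 x0 y] t0 x0 yV by simp
        ultimately show ?thesis by (rule order_trans[rotated])
      qed
      have 3: "norm (S t y - S t0 y) < e / 3" using dd t dt by (simp add: dist_norm)
      have Mn: "M * norm (x0 - y) < e / 3"
      proof -
        have "M * norm (x0 - y) < M * (e / (3 * M))" by (rule mult_strict_left_mono[OF ndy M])
        also have "M * (e / (3 * M)) = e / 3" using M by simp
        finally show ?thesis .
      qed
      have "norm (S t x0 - S t0 x0) \<le> norm (S t x0 - S t y) + norm (S t y - S t0 y) + norm (S t0 x0 - S t0 y)"
      proof -
        have eq: "S t x0 - S t0 x0 = (S t x0 - S t y) + (S t y - S t0 y) - (S t0 x0 - S t0 y)" by simp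
        have "norm ((S t x0 - S t y) + (S t y - S t0 y) - (S t0 x0 - S t0 y))
            \<le> norm ((S t x0 - S t y) + (S t y - S t0 y)) + norm (S t0 x0 - S t0 y)"
          by (rule norm_triangle_ineq4)
        moreover have "norm ((S t x0 - S t y) + (S t y - S t0 y)) \<le> norm (S t x0 - S t y) + norm (S t y - S t0 y)"
          by (rule norm_triangle_ineq)
        ultimately show ?thesis unfolding eq by linarith
      qed
      then show "dist (S t x0) (S t0 x0) < e" using 1 2 3 Mn by (simp add: dist_norm)
    qed
  qed
qed

theorem lemma2p10:
  fixes E :: "'x::complex_banach \<Rightarrow> 'z::complex_banach"
    and A :: "'x \<Rightarrow> 'z" and D :: "'x set" and \<mu> :: complex
    and Sr :: "real \<Rightarrow> 'x \<Rightarrow> 'x" and Sl :: "real \<Rightarrow> 'z \<Rightarrow> 'z"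
  assumes "standing_op E A D"
    and "has_res_index E A D"
    and "in_resolvent E A D \<mu>"
    and "int_semigroup_r E A D \<mu> (p_res E A D + 1) Sr"
    and "int_semigroup_l E A D \<mu> (p_res E A D + 1) Sl"
  shows "(\<forall>x0 \<in> Xran E A D \<mu> (p_res E A D + 1). continuous_on {0..} (\<lambda>t. Sr t x0)) \<and>
         (\<forall>z0 \<in> Zran E A D \<mu> (p_res E A D + 1). continuous_on {0..} (\<lambda>t. Sl t z0))"
proof -
  let ?p = "p_res E A D + 1"
  have El: "linear E" using assms(1) unfolding standing_op_def by (simp add: bounded_linear.linear)
  have Rl': "linear (res_op E A D \<mu>)" using assms(3) unfolding in_resolvent_def res_op_def
    by (simp add: bounded_linear.linear)
  have LR: "linear (Rr E A D \<mu> ^^ ?p)" unfolding Rr_def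
    by (intro linear_funpow linear_compose El Rl')
  have LL: "linear (Rl E A D \<mu> ^^ ?p)" unfolding Rl_def
    by (intro linear_funpow linear_compose El Rl')
  have r1: "\<forall>y \<in> range (Rr E A D \<mu> ^^ ?p). continuous_on {0..} (\<lambda>t. Sr t y)"
  proof
    fix y assume "y \<in> range (Rr E A D \<mu> ^^ ?p)"
    then obtain x where mx: "mild_solution E A D y x" and eq: "\<forall>t\<ge>0. Sr t y = iter_int ?p x t"
      using assms(4)[unfolded int_semigroup_r_def, THEN conjunct2, rule_format] by blast
    have "continuous_on {0..} (iter_int ?p x)"
      using mx unfolding mild_solution_def by (intro cont_iter_int) simp
    then show "continuous_on {0..} (\<lambda>t. Sr t y)"
      by (rule continuous_on_eq) (use eq in auto)
  qed
  have l1: "\<forall>y \<in> range (Rl E A D \<mu> ^^ ?p). continuous_on {0..} (\<lambda>t. Sl t y)"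
  proof
    fix y assume "y \<in> range (Rl E A D \<mu> ^^ ?p)"
    then obtain x where mx: "mild_solution (E \<circ> res_op E A D \<mu>) (A \<circ> res_op E A D \<mu>) UNIV y x"
        and eq: "\<forall>t\<ge>0. Sl t y = iter_int ?p x t"
      using assms(5)[unfolded int_semigroup_l_def, THEN conjunct2, rule_format] by blast
    have "continuous_on {0..} (iter_int ?p x)"
      using mx unfolding mild_solution_def by (intro cont_iter_int) simp
    then show "continuous_on {0..} (\<lambda>t. Sl t y)"
      by (rule continuous_on_eq) (use eq in auto)
  qed
  show ?thesis
  proof (intro conjI ballI)
    fix x0 assume "x0 \<in> Xran E A D \<mu> ?p"
    then show "continuous_on {0..} (\<lambda>t. Sr t x0)"
      by (rule main_closure[OF LR Xran_def assms(4)[unfolded int_semigroup_r_def, THEN conjunct1] r1])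
  next
    fix z0 assume "z0 \<in> Zran E A D \<mu> ?p"
    then show "continuous_on {0..} (\<lambda>t. Sl t z0)"
      by (rule main_closure[OF LL Zran_def assms(5)[unfolded int_semigroup_l_def, THEN conjunct1] l1])
  qed
qed

end
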